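(* Let $Z\in\mathfrak m$. (1) The map $\mathrm{ad}_\Upsilon\circ(\mathrm{Ad}_{\exp Z}-\mathrm{Ad}_{\exp(-Z)})$, restricted to $\mathfrak m$, is identically zero. (2) As maps $\mathfrak m\to\mathfrak m$, $S_ZJS_Z=\frac12\,\mathrm{ad}_{\left((\mathrm{Ad}_{\exp Z}+\mathrm{Ad}_{\exp(-Z)})\Upsilon\right)}$, where $S_Z=\sum_{n\ge0}\frac{\mathrm{ad}_Z^{2n}}{(2n)!}$.
   Context: Let $G$ be a simple complex algebraic group with Lie algebra $\mathfrak g$, with an algebraic involution whose differential gives the $\pm1$-eigenspace decomposition $\mathfrak g=\mathfrak k\oplus\mathfrak m$, arising from an irreducible Hermitian symmetric space: $\Upsilon$ lies in the center of $\mathfrak k$ and $\mathrm{ad}_\Upsilon$ has eigenvalues $\pm i$ on $\mathfrak m$ (so $\mathrm{ad}_\Upsilon$ vanishes on $\mathfrak k$); $J=\mathrm{ad}_\Upsilon|_{\mathfrak m}$. *)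

theory Defs
  imports "HOL-Analysis.Analysis"
begin

text \<open>The complex Lie algebra g is modelled as the finite-dimensional complex vector space
  complex^'n (coordinates w.r.t. a basis) with a bracket br.\<close>

definition complex_lie_algebra :: "(complex^'n \<Rightarrow> complex^'n \<Rightarrow> complex^'n) \<Rightarrow> bool" where
  "complex_lie_algebra br \<longleftrightarrow>
     (\<forall>a b x y z. br (a *s x + b *s y) z = a *s br x z + b *s br y z) \<and>
     (\<forall>x y. br x y = - br y x) \<and>
     (\<forall>x y z. br x (br y z) + br y (br z x) + br z (br x y) = 0)"

definition lie_ideal :: "(complex^'n \<Rightarrow> complex^'n \<Rightarrow> complex^'n) \<Rightarrow> (complex^'n) set \<Rightarrow> bool" where
  "lie_ideal br I \<longleftrightarrow> 0 \<in> I \<and> (\<forall>x\<in>I. \<forall>y\<in>I. x + y \<in> I) \<and> (\<forall>c. \<forall>x\<in>I. c *s x \<in> I) \<and>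
     (\<forall>x. \<forall>y\<in>I. br x y \<in> I)"

definition simple_lie_algebra :: "(complex^'n \<Rightarrow> complex^'n \<Rightarrow> complex^'n) \<Rightarrow> bool" where
  "simple_lie_algebra br \<longleftrightarrow> complex_lie_algebra br \<and> (\<exists>x y. br x y \<noteq> 0) \<and>
     (\<forall>I. lie_ideal br I \<longrightarrow> I = {0} \<or> I = UNIV)"

text \<open>A Lie algebra involution (differential of an algebraic involution of G).\<close>
definition lie_involution :: "(complex^'n \<Rightarrow> complex^'n \<Rightarrow> complex^'n) \<Rightarrow> (complex^'n \<Rightarrow> complex^'n) \<Rightarrow> bool" where
  "lie_involution br \<sigma> \<longleftrightarrow>
     (\<forall>a b x y. \<sigma> (a *s x + b *s y) = a *s \<sigma> x + b *s \<sigma> y) \<and>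
     (\<forall>x. \<sigma> (\<sigma> x) = x) \<and> (\<forall>x y. \<sigma> (br x y) = br (\<sigma> x) (\<sigma> y))"

text \<open>Ad_{exp Z} = exp(ad_Z), as the exponential series of the linear map ad_Z.\<close>
definition Ad_exp :: "(complex^'n \<Rightarrow> complex^'n \<Rightarrow> complex^'n) \<Rightarrow> complex^'n \<Rightarrow> complex^'n \<Rightarrow> complex^'n" where
  "Ad_exp br Z X = (\<Sum>k. ((br Z) ^^ k) X /\<^sub>R fact k)"

definition S_op :: "(complex^'n \<Rightarrow> complex^'n \<Rightarrow> complex^'n) \<Rightarrow> complex^'n \<Rightarrow> complex^'n \<Rightarrow> complex^'n" where
  "S_op br Z X = (\<Sum>k. ((br Z) ^^ (2*k)) X /\<^sub>R fact (2*k))"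

end

theory Submission
  imports Defs
begin

lemma bil_Cauchy_product_sums:
  fixes a :: "nat \<Rightarrow> 'a::real_normed_vector" and b :: "nat \<Rightarrow> 'b::real_normed_vector"
    and h :: "'a \<Rightarrow> 'b \<Rightarrow> 'c::real_normed_vector"
  assumes h: "bounded_bilinear h"
    and a: "summable (\<lambda>k. norm (a k))" and sa: "summable a"
    and b: "summable (\<lambda>k. norm (b k))" and sb: "summable b"
  shows "(\<lambda>k. \<Sum>i\<le>k. h (a i) (b (k - i))) sums (h (\<Sum>k. a k) (\<Sum>k. b k))"
proof -
  obtain K where K: "K > 0" "\<And>x y. norm (h x y) \<le> norm x * norm y * K"
    using bounded_bilinear.pos_bounded[OF h] by blast
  let ?S1 = "\<lambda>n::nat. {..<n} \<times> {..<n}"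
  let ?S2 = "\<lambda>n::nat. {(i,j). i + j < n}"
  have S1_mono: "\<And>m n. m \<le> n \<Longrightarrow> ?S1 m \<subseteq> ?S1 n" by auto
  have S2_le_S1: "\<And>n. ?S2 n \<subseteq> ?S1 n" by auto
  have S1_le_S2: "\<And>n. ?S1 (n div 2) \<subseteq> ?S2 n" by auto
  have finite_S1: "\<And>n. finite (?S1 n)" by simp
  with S2_le_S1 have finite_S2: "\<And>n. finite (?S2 n)" by (rule finite_subset)
  let ?g = "\<lambda>(i,j). h (a i) (b j)"
  let ?f = "\<lambda>(i,j). norm (a i) * norm (b j) * K"
  have f_nonneg: "\<And>x. 0 \<le> ?f x" using K by auto
  then have norm_sum_f: "\<And>A. norm (sum ?f A) = sum ?f A"
    unfolding real_norm_def
    by (simp only: abs_of_nonneg sum_nonneg [rule_format])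
  have hsum: "\<And>n. h (\<Sum>k<n. a k) (\<Sum>k<n. b k) = sum ?g (?S1 n)"
  proof -
    fix n
    have "h (\<Sum>k<n. a k) (\<Sum>k<n. b k) = (\<Sum>i<n. \<Sum>j<n. h (a i) (b j))"
      by (subst bounded_bilinear.sum_left[OF h], subst bounded_bilinear.sum_right[OF h], rule refl)
    then show "h (\<Sum>k<n. a k) (\<Sum>k<n. b k) = sum ?g (?S1 n)"
      by (simp add: sum.cartesian_product)
  qed
  have "(\<lambda>n. h (\<Sum>k<n. a k) (\<Sum>k<n. b k)) \<longlonglongrightarrow> h (\<Sum>k. a k) (\<Sum>k. b k)"
    by (intro bounded_bilinear.tendsto[OF h] summable_LIMSEQ sa sb)
  then have 1: "(\<lambda>n. sum ?g (?S1 n)) \<longlonglongrightarrow> h (\<Sum>k. a k) (\<Sum>k. b k)"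
    by (simp only: hsum)
  have "(\<lambda>n. (\<Sum>k<n. norm (a k)) * (\<Sum>k<n. norm (b k)) * K) \<longlonglongrightarrow> (\<Sum>k. norm (a k)) * (\<Sum>k. norm (b k)) * K"
    using a b by (intro tendsto_mult summable_LIMSEQ tendsto_const)
  then have "(\<lambda>n. sum ?f (?S1 n)) \<longlonglongrightarrow> (\<Sum>k. norm (a k)) * (\<Sum>k. norm (b k)) * K"
  proof (rule Lim_transform_eventually, intro always_eventually allI)
    fix n
    have "(\<Sum>k<n. norm (a k)) * (\<Sum>k<n. norm (b k)) * K = (\<Sum>i<n. \<Sum>j<n. norm (a i) * norm (b j) * K)"
      unfolding sum_product by (simp add: sum_distrib_right)
    then show "(\<Sum>k<n. norm (a k)) * (\<Sum>k<n. norm (b k)) * K = sum ?f (?S1 n)"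
      by (simp add: sum.cartesian_product)
  qed
  then have "convergent (\<lambda>n. sum ?f (?S1 n))"
    by (rule convergentI)
  then have Cauchy: "Cauchy (\<lambda>n. sum ?f (?S1 n))"
    by (rule convergent_Cauchy)
  have "Zfun (\<lambda>n. sum ?f (?S1 n - ?S2 n)) sequentially"
  proof (rule ZfunI, simp only: eventually_sequentially norm_sum_f)
    fix r :: real
    assume r: "0 < r"
    from CauchyD [OF Cauchy r] obtain N
      where "\<forall>m\<ge>N. \<forall>n\<ge>N. norm (sum ?f (?S1 m) - sum ?f (?S1 n)) < r" ..
    then have "\<And>m n. N \<le> n \<Longrightarrow> n \<le> m \<Longrightarrow> norm (sum ?f (?S1 m - ?S1 n)) < r"
      by (simp only: sum_diff finite_S1 S1_mono)
    then have N: "\<And>m n. N \<le> n \<Longrightarrow> n \<le> m \<Longrightarrow> sum ?f (?S1 m - ?S1 n) < r"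
      by (simp only: norm_sum_f)
    show "\<exists>N. \<forall>n\<ge>N. sum ?f (?S1 n - ?S2 n) < r"
    proof (intro exI allI impI)
      fix n
      assume "2 * N \<le> n"
      then have n: "N \<le> n div 2" by simp
      have "sum ?f (?S1 n - ?S2 n) \<le> sum ?f (?S1 n - ?S1 (n div 2))"
        by (intro sum_mono2 finite_Diff finite_S1 f_nonneg Diff_mono subset_refl S1_le_S2)
      also have "\<dots> < r"
        using n div_le_dividend by (rule N)
      finally show "sum ?f (?S1 n - ?S2 n) < r" .
    qed
  qed
  then have "Zfun (\<lambda>n. sum ?g (?S1 n - ?S2 n)) sequentially"
    apply (rule Zfun_le [rule_format])
    apply (simp only: norm_sum_f)
    apply (rule order_trans [OF norm_sum sum_mono])
    apply (auto simp add: K)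
    done
  then have 2: "(\<lambda>n. sum ?g (?S1 n) - sum ?g (?S2 n)) \<longlonglongrightarrow> 0"
    unfolding tendsto_Zfun_iff diff_0_right
    by (simp only: sum_diff finite_S1 S2_le_S1)
  with 1 have "(\<lambda>n. sum ?g (?S2 n)) \<longlonglongrightarrow> h (\<Sum>k. a k) (\<Sum>k. b k)"
    by (rule Lim_transform2)
  then show ?thesis
    by (simp only: sums_def sum.triangle_reindex)
qed

lemma linear_funpow: "linear (D::'a::real_vector \<Rightarrow> 'a) \<Longrightarrow> linear (D^^n)"
  by (induction n) (simp_all add: linear_compose real_vector.linear_id)

lemma bounded_linear_funpow: "bounded_linear (D::'a::real_normed_vector \<Rightarrow> 'a) \<Longrightarrow> bounded_linear (D^^n)"
  by (induction n) (simp_all add: id_def o_def bounded_linear_ident bounded_linear_compose)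

lemma norm_funpow_le:
  fixes D :: "'a::real_normed_vector \<Rightarrow> 'a"
  assumes "bounded_linear D"
  obtains K where "K > 0" "\<And>n x. norm ((D^^n) x) \<le> norm x * K^n"
proof -
  obtain K where K: "K > 0" "\<And>x. norm (D x) \<le> norm x * K"
    using bounded_linear.pos_bounded[OF assms] by blast
  have "norm ((D^^n) x) \<le> norm x * K^n" for n x
  proof (induction n)
    case 0 then show ?case by simp
  next
    case (Suc n)
    have "norm ((D^^Suc n) x) = norm (D ((D^^n) x))" by simp
    also have "\<dots> \<le> norm ((D^^n) x) * K" by (rule K(2))
    also have "\<dots> \<le> norm x * K^n * K" using Suc K(1) by (intro mult_right_mono) auto
    finally show ?case by (simp add: mult_ac)
  qed
  then show ?thesis using K(1) that by blast
qed

lemma summable_exp_op: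
  fixes D :: "'a::real_normed_vector \<Rightarrow> 'a"
  assumes "bounded_linear D"
  shows "summable (\<lambda>n. norm ((D^^n) x /\<^sub>R fact n))"
proof -
  obtain K where K: "K > 0" "\<And>n x. norm ((D^^n) x) \<le> norm x * K^n"
    using norm_funpow_le[OF assms] by blast
  have S: "summable (\<lambda>n. norm x * (inverse (fact n) * K^n))"
    by (intro summable_mult summable_exp)
  have B: "norm (norm ((D^^n) x /\<^sub>R fact n)) \<le> norm x * (inverse (fact n) * K^n)" for n
  proof -
    have "norm (norm ((D^^n) x /\<^sub>R fact n)) = norm ((D^^n) x) * inverse (fact n)"
      by simp
    also have "\<dots> \<le> norm x * K^n * inverse (fact n)"
      using K(2) by (intro mult_right_mono) auto
    finally show ?thesis by (simp add: mult_ac)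
  qed
  show ?thesis
    by (rule summable_comparison_test'[OF S]) (rule B)
qed

lemma pascal_sum:
  fixes F :: "nat \<Rightarrow> nat \<Rightarrow> 'v::real_vector"
  shows "(\<Sum>k\<le>n. real (n choose k) *\<^sub>R (F (Suc k) (n-k) + F k (Suc (n-k)))) =
         (\<Sum>k\<le>Suc n. real (Suc n choose k) *\<^sub>R F k (Suc n - k))"
proof -
  have A: "(\<Sum>k\<le>n. real (n choose k) *\<^sub>R F k (Suc (n-k))) =
     F 0 (Suc n) + (\<Sum>k\<le>n. real (n choose Suc k) *\<^sub>R F (Suc k) (n-k))"
  proof -
    have "(\<Sum>k\<le>Suc n. real (n choose k) *\<^sub>R F k (Suc n - k)) = (\<Sum>k\<le>n. real (n choose k) *\<^sub>R F k (Suc n - k))"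
      by (simp add: sum.atMost_Suc binomial_eq_0)
    also have "\<dots> = (\<Sum>k\<le>n. real (n choose k) *\<^sub>R F k (Suc (n-k)))"
      by (intro sum.cong refl) (simp add: Suc_diff_le)
    finally have 1: "(\<Sum>k\<le>Suc n. real (n choose k) *\<^sub>R F k (Suc n - k)) = (\<Sum>k\<le>n. real (n choose k) *\<^sub>R F k (Suc (n-k)))" .
    have 2: "(\<Sum>k\<le>Suc n. real (n choose k) *\<^sub>R F k (Suc n - k)) = F 0 (Suc n) + (\<Sum>k\<le>n. real (n choose Suc k) *\<^sub>R F (Suc k) (n-k))"
      by (subst sum.atMost_Suc_shift) simp
    from 1 2 show ?thesis by metis
  qed
  have "(\<Sum>k\<le>Suc n. real (Suc n choose k) *\<^sub>R F k (Suc n - k)) =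
        F 0 (Suc n) + (\<Sum>k\<le>n. real (Suc n choose Suc k) *\<^sub>R F (Suc k) (n - k))"
    by (subst sum.atMost_Suc_shift) simp
  also have "\<dots> = F 0 (Suc n) + (\<Sum>k\<le>n. real (n choose k) *\<^sub>R F (Suc k) (n - k)) +
        (\<Sum>k\<le>n. real (n choose Suc k) *\<^sub>R F (Suc k) (n - k))"
    by (simp add: scaleR_add_left sum.distrib)
  also have "\<dots> = (\<Sum>k\<le>n. real (n choose k) *\<^sub>R F (Suc k) (n - k)) + (\<Sum>k\<le>n. real (n choose k) *\<^sub>R F k (Suc (n-k)))"
    using A by simp
  also have "\<dots> = (\<Sum>k\<le>n. real (n choose k) *\<^sub>R (F (Suc k) (n-k) + F k (Suc (n-k))))"
    by (simp add: scaleR_add_right sum.distrib)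
  finally show ?thesis by simp
qed


lemma leibniz:
  assumes h: "bounded_bilinear h" and l1: "linear D1" and l2: "linear D2" and l3: "linear D3"
    and der: "\<And>x y. D3 (h x y) = h (D1 x) y + h x (D2 y)"
  shows "(D3^^n) (h x y) = (\<Sum>k\<le>n. real (n choose k) *\<^sub>R h ((D1^^k) x) ((D2^^(n-k)) y))"
proof (induction n arbitrary: x y)
  case 0 then show ?case by simp
next
  case (Suc n)
  let ?F = "\<lambda>i j. h ((D1^^i) x) ((D2^^j) y)"
  have "(D3^^Suc n) (h x y) = (D3^^n) (D3 (h x y))"
    by (simp add: funpow_Suc_right del: funpow.simps)
  also have "\<dots> = (D3^^n) (h (D1 x) y) + (D3^^n) (h x (D2 y))"
    by (simp add: der linear_add[OF linear_funpow[OF l3]])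
  also have "\<dots> = (\<Sum>k\<le>n. real (n choose k) *\<^sub>R ?F (Suc k) (n-k)) + (\<Sum>k\<le>n. real (n choose k) *\<^sub>R ?F k (Suc (n-k)))"
    unfolding Suc.IH by (simp add: funpow_Suc_right del: funpow.simps)
  also have "\<dots> = (\<Sum>k\<le>n. real (n choose k) *\<^sub>R (?F (Suc k) (n-k) + ?F k (Suc (n-k))))"
    by (simp add: scaleR_add_right sum.distrib)
  also have "\<dots> = (\<Sum>k\<le>Suc n. real (Suc n choose k) *\<^sub>R ?F k (Suc n - k))"
    by (rule pascal_sum)
  finally show ?case .
qed

lemma exp_hom:
  fixes h :: "'a::banach \<Rightarrow> 'b::banach \<Rightarrow> 'c::real_normed_vector"
  assumes h: "bounded_bilinear h" and l1: "bounded_linear D1" and l2: "bounded_linear D2"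
    and l3: "bounded_linear D3"
    and der: "\<And>x y. D3 (h x y) = h (D1 x) y + h x (D2 y)"
  shows "(\<Sum>n. (D3^^n) (h x y) /\<^sub>R fact n) = h (\<Sum>n. (D1^^n) x /\<^sub>R fact n) (\<Sum>n. (D2^^n) y /\<^sub>R fact n)"
proof -
  have s1: "summable (\<lambda>n. norm ((D1^^n) x /\<^sub>R fact n))" by (rule summable_exp_op[OF l1])
  have s2: "summable (\<lambda>n. norm ((D2^^n) y /\<^sub>R fact n))" by (rule summable_exp_op[OF l2])
  have C: "(\<lambda>k. \<Sum>i\<le>k. h ((D1^^i) x /\<^sub>R fact i) ((D2^^(k-i)) y /\<^sub>R fact (k-i))) sums
      h (\<Sum>n. (D1^^n) x /\<^sub>R fact n) (\<Sum>n. (D2^^n) y /\<^sub>R fact n)"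
    by (rule bil_Cauchy_product_sums[OF h s1 summable_norm_cancel[OF s1] s2 summable_norm_cancel[OF s2]])
  have T: "(\<Sum>i\<le>k. h ((D1^^i) x /\<^sub>R fact i) ((D2^^(k-i)) y /\<^sub>R fact (k-i))) = (D3^^k) (h x y) /\<^sub>R fact k" for k
  proof -
    have "(D3^^k) (h x y) /\<^sub>R fact k = (\<Sum>i\<le>k. (real (k choose i) / fact k) *\<^sub>R h ((D1^^i) x) ((D2^^(k-i)) y))"
      unfolding leibniz[OF h bounded_linear.linear[OF l1] bounded_linear.linear[OF l2] bounded_linear.linear[OF l3] der]
      by (simp add: scaleR_sum_right divide_inverse_commute)
    also have "\<dots> = (\<Sum>i\<le>k. h ((D1^^i) x /\<^sub>R fact i) ((D2^^(k-i)) y /\<^sub>R fact (k-i)))"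
    proof (intro sum.cong refl)
      fix i assume "i \<in> {..k}"
      then have "i \<le> k" by simp
      then have "real (k choose i) / fact k = inverse (fact i) * inverse (fact (k-i))"
        by (simp add: binomial_fact field_simps)
      then show "(real (k choose i) / fact k) *\<^sub>R h ((D1^^i) x) ((D2^^(k-i)) y) = h ((D1^^i) x /\<^sub>R fact i) ((D2^^(k-i)) y /\<^sub>R fact (k-i))"
        by (simp add: bounded_bilinear.scaleR_left[OF h] bounded_bilinear.scaleR_right[OF h])
    qed
    finally show ?thesis by simp
  qed
  from C show ?thesis unfolding T by (rule sums_unique[symmetric])
qed


definition Eop :: "('a::real_normed_vector \<Rightarrow> 'a) \<Rightarrow> 'a \<Rightarrow> 'a" where
  "Eop D X = (\<Sum>n. (D^^n) X /\<^sub>R fact n)"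

lemma Eop_sums:
  fixes D :: "'a::banach \<Rightarrow> 'a"
  assumes "bounded_linear D"
  shows "(\<lambda>n. (D^^n) X /\<^sub>R fact n) sums Eop D X"
  unfolding Eop_def using summable_norm_cancel[OF summable_exp_op[OF assms]] by (rule summable_sums)

lemma funpow_neg:
  fixes D :: "'a::real_vector \<Rightarrow> 'a"
  assumes "linear D"
  shows "((\<lambda>y. - D y)^^n) X = (-1)^n *\<^sub>R (D^^n) X"
proof (induction n)
  case 0 then show ?case by simp
next
  case (Suc n)
  then show ?case by (simp add: linear_cmul[OF assms] real_vector.linear_neg[OF assms])
qed

lemma funpow_zero_map: "((\<lambda>_. 0)^^n) (X::'a::real_vector) = (if n = 0 then X else 0)"
  by (cases n) simp_all

lemma Eop_inverse:
  fixes D :: "'a::banach \<Rightarrow> 'a"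
  assumes D: "bounded_linear D"
  shows "Eop D (Eop (\<lambda>y. - D y) X) = X"
proof -
  let ?L = "Blinfun D"
  let ?D1 = "\<lambda>F::'a \<Rightarrow>\<^sub>L 'a. F o\<^sub>L ?L"
  let ?Dm = "\<lambda>y. - D y"
  have LD: "blinfun_apply ?L = D" by (rule bounded_linear_Blinfun_apply[OF D])
  have b1: "bounded_linear ?D1"
    by (rule bounded_bilinear.bounded_linear_left[OF bounded_bilinear_blinfun_compose])
  have bm: "bounded_linear ?Dm" using D by (rule bounded_linear_minus)
  have b0: "bounded_linear (\<lambda>_::'a. 0::'a)" by (rule bounded_linear_zero)
  have der: "(\<lambda>_. 0) (blinfun_apply F y) = blinfun_apply (?D1 F) y + blinfun_apply F (?Dm y)" for F y
    by (simp add: LD blinfun.minus_right)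
  note H = exp_hom[OF bounded_bilinear_blinfun_apply b1 bm b0 der, of id_blinfun "X"]
  have lhs: "(\<Sum>n. ((\<lambda>_. 0)^^n) (blinfun_apply id_blinfun X) /\<^sub>R fact n) = X"
  proof -
    have "(\<lambda>n. ((\<lambda>_. 0)^^n) (blinfun_apply id_blinfun X) /\<^sub>R fact n) =
          (\<lambda>n. if n = 0 then X /\<^sub>R fact n else 0)"
      by (auto simp: funpow_zero_map)
    also have "\<dots> sums (X /\<^sub>R fact 0)" by (rule sums_single)
    finally show ?thesis by (simp add: sums_iff)
  qed
  have pw: "blinfun_apply ((?D1^^n) id_blinfun) Y = (D^^n) Y" for n Y
  proof (induction n arbitrary: Y)
    case 0 then show ?case by simp
  next
    case (Suc n)
    have "blinfun_apply ((?D1^^Suc n) id_blinfun) Y = blinfun_apply ((?D1^^n) id_blinfun) (D Y)"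
      by (simp add: LD)
    also have "\<dots> = (D^^Suc n) Y" by (simp add: Suc.IH funpow_Suc_right del: funpow.simps)
    finally show ?case .
  qed
  have ev: "blinfun_apply (\<Sum>n. (?D1^^n) id_blinfun /\<^sub>R fact n) Y = Eop D Y" for Y
  proof -
    have sm: "summable (\<lambda>n. (?D1^^n) id_blinfun /\<^sub>R fact n)"
      by (rule summable_norm_cancel[OF summable_exp_op[OF b1]])
    have "blinfun_apply (\<Sum>n. (?D1^^n) id_blinfun /\<^sub>R fact n) Y = (\<Sum>n. blinfun_apply ((?D1^^n) id_blinfun /\<^sub>R fact n) Y)"
      by (rule bounded_linear.suminf[OF bounded_bilinear.bounded_linear_left[OF bounded_bilinear_blinfun_apply] sm])
    also have "\<dots> = Eop D Y" unfolding Eop_def by (simp add: pw blinfun.bilinear_simps)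
    finally show ?thesis .
  qed
  have "X = Eop D (\<Sum>n. (?Dm^^n) X /\<^sub>R fact n)" using H unfolding lhs ev .
  then show ?thesis unfolding Eop_def[of ?Dm] by (rule sym)
qed



lemma scaleR_cvec: "(r::real) *\<^sub>R (x::complex^'n) = complex_of_real r *s x"
  unfolding vec_eq_iff by (simp add: complex_eq_iff)

lemma half_add_self: "(1/2::real) *\<^sub>R (a + a) = (a::'a::real_vector)"
proof -
  have "(1/2::real) *\<^sub>R (a + a) = ((1/2) + (1/2::real)) *\<^sub>R a"
    by (simp only: scaleR_add_left scaleR_add_right)
  then show ?thesis by simp
qed

lemma grp3: "(a::'a::ab_group_add) + - b + - c = 0 \<Longrightarrow> a = c + b"
  by (simp add: algebra_simps)

context
  fixes br :: "complex^'n \<Rightarrow> complex^'n \<Rightarrow> complex^'n"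
  assumes L: "complex_lie_algebra br"
begin

lemma br_lin: "br (a *s x + b *s y) z = a *s br x z + b *s br y z"
  using L unfolding complex_lie_algebra_def by blast

lemma br_anti: "br x y = - br y x"
  using L unfolding complex_lie_algebra_def by blast

lemma br_jacobi: "br x (br y z) + br y (br z x) + br z (br x y) = 0"
  using L unfolding complex_lie_algebra_def by blast

lemma br_add_left: "br (x + y) z = br x z + br y z"
  using br_lin[of 1 x 1 y z] by simp

lemma br_smult_left: "br (c *s x) z = c *s br x z"
  using br_lin[of c x 0 0 z] by simp

lemma br_add_right: "br z (x + y) = br z x + br z y"
proof -
  have "br z (x + y) = - br (x + y) z" by (rule br_anti)
  also have "\<dots> = - (br x z + br y z)" by (simp only: br_add_left)
  also have "\<dots> = br z x + br z y" by (simp only: br_anti[of x z] br_anti[of y z] minus_add_distrib minus_minus)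
  finally show ?thesis .
qed

lemma br_smult_right: "br z (c *s x) = c *s br z x"
proof -
  have "br z (c *s x) = - br (c *s x) z" by (rule br_anti)
  also have "\<dots> = - (c *s br x z)" by (simp only: br_smult_left)
  also have "\<dots> = c *s br z x" by (simp only: br_anti[of x z] vector_smult_rneg minus_minus)
  finally show ?thesis .
qed

lemma br_neg_left: "br (- x) z = - br x z"
  using br_smult_left[of "-1" x z] by simp

lemma br_neg_right: "br z (- x) = - br z x"
  using br_smult_right[of z "-1" x] by simp

lemma br_bounded_bilinear: "bounded_bilinear br"
proof -
  have "bilinear br"
    unfolding bilinear_def
    by (auto intro!: linearI simp: br_add_left br_add_right scaleR_cvec br_smult_left br_smult_right)
  then show ?thesis by (simp add: bilinear_conv_bounded_bilinear)
qed

lemma br_bl: "bounded_linear (br Z)"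
  by (rule bounded_bilinear.bounded_linear_right[OF br_bounded_bilinear])

lemma br_der: "br Z (br x y) = br (br Z x) y + br x (br Z y)"
proof -
  have "br Z (br x y) + br x (br y Z) + br y (br Z x) = 0" by (rule br_jacobi)
  moreover have "br x (br y Z) = - br x (br Z y)" by (simp only: br_anti[of y Z] br_neg_right)
  moreover have "br y (br Z x) = - br (br Z x) y" by (rule br_anti)
  ultimately have "br Z (br x y) + - br x (br Z y) + - br (br Z x) y = 0" by simp
  then show ?thesis by (rule grp3)
qed

lemma Ad_exp_Eop: "Ad_exp br Z X = Eop (br Z) X"
  by (simp add: Ad_exp_def Eop_def)

lemma Ad_hom: "Ad_exp br Z (br A B) = br (Ad_exp br Z A) (Ad_exp br Z B)"
  unfolding Ad_exp_def
  by (rule exp_hom[OF br_bounded_bilinear br_bl[of Z] br_bl[of Z] br_bl[of Z] br_der[of Z], of A B])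

lemma br_neg_fun: "br (- Z) = (\<lambda>y. - br Z y)"
  by (rule ext) (rule br_neg_left)

lemma Ad_inv: "Ad_exp br Z (Ad_exp br (- Z) X) = X"
  unfolding Ad_exp_Eop br_neg_fun by (rule Eop_inverse[OF br_bl[of Z]])


lemma Ad_sums: "(\<lambda>n. ((br Z)^^n) X /\<^sub>R fact n) sums Ad_exp br Z X"
  unfolding Ad_exp_Eop by (rule Eop_sums[OF br_bl[of Z]])

lemma Ad_neg_sums: "(\<lambda>n. ((-1)^n *\<^sub>R ((br Z)^^n) X) /\<^sub>R fact n) sums Ad_exp br (- Z) X"
proof -
  have "(\<lambda>n. ((br (- Z))^^n) X /\<^sub>R fact n) sums Ad_exp br (- Z) X" by (rule Ad_sums)
  then show ?thesis
    unfolding br_neg_fun funpow_neg[OF bounded_linear.linear[OF br_bl[of Z]]] .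
qed

lemma S_op_eq: "S_op br Z X = (1/2::real) *\<^sub>R (Ad_exp br Z X + Ad_exp br (- Z) X)"
proof -
  let ?w = "\<lambda>n. ((br Z)^^n) X /\<^sub>R fact n"
  let ?f = "\<lambda>n. ?w n + ((-1)^n *\<^sub>R ((br Z)^^n) X) /\<^sub>R fact n"
  have fs: "?f sums (Ad_exp br Z X + Ad_exp br (- Z) X)"
    by (rule sums_add[OF Ad_sums Ad_neg_sums])
  have sm: "strict_mono (\<lambda>k::nat. 2 * k)" by (simp add: strict_mono_def)
  have z: "?f n = 0" if "n \<notin> range (\<lambda>k::nat. 2 * k)" for n
  proof -
    have "odd n"
    proof
      assume "even n"
      then have "n = 2 * (n div 2)" by simp
      with that show False by blast
    qed
    then have m1: "(-1::real)^n = -1" by simp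
    show ?thesis by (simp only: m1 scaleR_minus1_left scaleR_minus_right right_minus)
  qed
  have "(\<lambda>k. ?f (2 * k)) sums (Ad_exp br Z X + Ad_exp br (- Z) X)"
  proof -
    have "(\<lambda>k. ?f (2 * k)) sums (Ad_exp br Z X + Ad_exp br (- Z) X) \<longleftrightarrow> ?f sums (Ad_exp br Z X + Ad_exp br (- Z) X)"
      by (rule sums_mono_reindex[OF sm]) (rule z)
    with fs show ?thesis by blast
  qed
  then have sf: "(\<lambda>k. (1/2::real) *\<^sub>R ?f (2 * k)) sums ((1/2::real) *\<^sub>R (Ad_exp br Z X + Ad_exp br (- Z) X))"
    by (rule bounded_linear.sums[OF bounded_linear_scaleR_right])
  have eqf: "(\<lambda>k. (1/2::real) *\<^sub>R ?f (2 * k)) = (\<lambda>k. ?w (2 * k))"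
  proof (rule ext)
    fix k
    have p1: "(-1::real)^(2*k) = 1" by simp
    have "?f (2 * k) = ?w (2 * k) + ?w (2 * k)" by (simp only: p1 scaleR_one)
    then show "(1/2::real) *\<^sub>R ?f (2 * k) = ?w (2 * k)" by (simp only: half_add_self)
  qed
  from sf have "(\<lambda>k. ?w (2 * k)) sums ((1/2::real) *\<^sub>R (Ad_exp br Z X + Ad_exp br (- Z) X))"
    unfolding eqf .
  then show ?thesis unfolding S_op_def by (rule sums_unique[symmetric])
qed

end


lemma sig_props:
  assumes "lie_involution br \<sigma>"
  shows "\<sigma> (- x) = - \<sigma> x" "\<sigma> (br x y) = br (\<sigma> x) (\<sigma> y)"
proof -
  have "\<sigma> ((-1) *s x + 0 *s x) = (-1) *s \<sigma> x + 0 *s \<sigma> x"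
    using assms unfolding lie_involution_def by blast
  then show "\<sigma> (- x) = - \<sigma> x" by simp
  show "\<sigma> (br x y) = br (\<sigma> x) (\<sigma> y)"
    using assms unfolding lie_involution_def by blast
qed

lemma parity:
  assumes L: "complex_lie_algebra br" and inv: "lie_involution br \<sigma>"
    and Zm: "\<sigma> Z = - Z" and Xm: "\<sigma> X = - X"
  shows "(even n \<longrightarrow> \<sigma> (((br Z)^^n) X) = - ((br Z)^^n) X) \<and> (odd n \<longrightarrow> \<sigma> (((br Z)^^n) X) = ((br Z)^^n) X)"
proof (induction n)
  case 0 then show ?case using Xm by simp
next
  case (Suc n)
  let ?Y = "((br Z)^^n) X"
  have "\<sigma> (((br Z)^^Suc n) X) = br (- Z) (\<sigma> ?Y)"
    using sig_props(2)[OF inv] Zm by simp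
  also have "\<dots> = - br Z (\<sigma> ?Y)" by (rule br_neg_left[OF L])
  finally have e: "\<sigma> (((br Z)^^Suc n) X) = - br Z (\<sigma> ?Y)" .
  show ?case
  proof (cases "even n")
    case True
    then have "\<sigma> ?Y = - ?Y" using Suc by simp
    then show ?thesis using e True by (simp add: br_neg_right[OF L])
  next
    case False
    then have "\<sigma> ?Y = ?Y" using Suc by simp
    then show ?thesis using e False by simp
  qed
qed

lemma part1:
  assumes L: "complex_lie_algebra br" and inv: "lie_involution br \<sigma>"
    and Zm: "\<sigma> Z = - Z" and Xm: "\<sigma> X = - X"
    and Uc: "\<forall>X. \<sigma> X = X \<longrightarrow> br U X = 0"
  shows "br U (Ad_exp br Z X - Ad_exp br (- Z) X) = 0"
proof -
  let ?w = "\<lambda>n. ((br Z)^^n) X"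
  have s: "(\<lambda>n. ?w n /\<^sub>R fact n - ((-1)^n *\<^sub>R ?w n) /\<^sub>R fact n) sums (Ad_exp br Z X - Ad_exp br (- Z) X)"
    by (rule sums_diff[OF Ad_sums[OF L] Ad_neg_sums[OF L]])
  have s2: "(\<lambda>n. br U (?w n /\<^sub>R fact n - ((-1)^n *\<^sub>R ?w n) /\<^sub>R fact n)) sums br U (Ad_exp br Z X - Ad_exp br (- Z) X)"
    by (rule bounded_linear.sums[OF br_bl[OF L, of U] s])
  have t: "br U (?w n /\<^sub>R fact n - ((-1)^n *\<^sub>R ?w n) /\<^sub>R fact n) = 0" for n
  proof (cases "even n")
    case True
    then show ?thesis by (simp add: real_vector.linear_0[OF bounded_linear.linear[OF br_bl[OF L, of U]]])
  next
    case False
    then have "\<sigma> (?w n) = ?w n" using parity[OF L inv Zm Xm, of n] by simp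
    then have "br U (?w n) = 0" using Uc by blast
    moreover have "?w n /\<^sub>R fact n - ((-1)^n *\<^sub>R ?w n) /\<^sub>R fact n = ?w n /\<^sub>R fact n + ?w n /\<^sub>R fact n"
      using False by simp
    ultimately show ?thesis
      by (simp only: real_vector.linear_add[OF bounded_linear.linear[OF br_bl[OF L, of U]]]
          linear_cmul[OF bounded_linear.linear[OF br_bl[OF L, of U]]] scaleR_zero_right add_0)
  qed
  from s2 show ?thesis unfolding t by (simp add: sums_iff)
qed


theorem lemma4p9:
  fixes br :: "complex^'n \<Rightarrow> complex^'n \<Rightarrow> complex^'n"
    and \<sigma> :: "complex^'n \<Rightarrow> complex^'n"
    and \<Upsilon> Z :: "complex^'n"
  assumes simple: "simple_lie_algebra br"
    and inv: "lie_involution br \<sigma>"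
    and Ups_k: "\<sigma> \<Upsilon> = \<Upsilon>"
    and Ups_center: "\<forall>X. \<sigma> X = X \<longrightarrow> br \<Upsilon> X = 0"
    and eig_decomp: "\<forall>X. \<sigma> X = - X \<longrightarrow>
        (\<exists>A B. X = A + B \<and> \<sigma> A = - A \<and> \<sigma> B = - B \<and>
               br \<Upsilon> A = \<i> *s A \<and> br \<Upsilon> B = (- \<i>) *s B)"
    and eig_plus: "\<exists>A. \<sigma> A = - A \<and> A \<noteq> 0 \<and> br \<Upsilon> A = \<i> *s A"
    and eig_minus: "\<exists>B. \<sigma> B = - B \<and> B \<noteq> 0 \<and> br \<Upsilon> B = (- \<i>) *s B"
    and Zm: "\<sigma> Z = - Z"
  shows "(\<forall>X. \<sigma> X = - X \<longrightarrow> br \<Upsilon> (Ad_exp br Z X - Ad_exp br (- Z) X) = 0) \<and>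
         (\<forall>X. \<sigma> X = - X \<longrightarrow>
            S_op br Z (br \<Upsilon> (S_op br Z X)) =
            (1/2 :: complex) *s br (Ad_exp br Z \<Upsilon> + Ad_exp br (- Z) \<Upsilon>) X)"
proof -
  have L: "complex_lie_algebra br" using simple unfolding simple_lie_algebra_def by blast
  have P1: "\<forall>X. \<sigma> X = - X \<longrightarrow> br \<Upsilon> (Ad_exp br Z X - Ad_exp br (- Z) X) = 0"
    using part1[OF L inv Zm _ Ups_center] by blast
  have P2: "S_op br Z (br \<Upsilon> (S_op br Z X)) =
            (1/2 :: complex) *s br (Ad_exp br Z \<Upsilon> + Ad_exp br (- Z) \<Upsilon>) X" if Xm: "\<sigma> X = - X" for X
  proof -
    let ?P = "Ad_exp br Z" and ?M = "Ad_exp br (- Z)"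
    have lin: "linear (br \<Upsilon>)" by (rule bounded_linear.linear[OF br_bl[OF L, of "\<Upsilon>"]])
    have "br \<Upsilon> (?P X - ?M X) = 0" using P1 Xm by blast
    then have e1: "br \<Upsilon> (?P X) = br \<Upsilon> (?M X)"
      by (simp add: real_vector.linear_diff[OF lin])
    have W1: "br \<Upsilon> (S_op br Z X) = br \<Upsilon> (?M X)"
      unfolding S_op_eq[OF L] linear_cmul[OF lin] real_vector.linear_add[OF lin] e1
      by (rule half_add_self)
    have W2: "br \<Upsilon> (S_op br Z X) = br \<Upsilon> (?P X)" using W1 e1 by simp
    have "S_op br Z (br \<Upsilon> (S_op br Z X)) =
          (1/2::real) *\<^sub>R (?P (br \<Upsilon> (S_op br Z X)) + ?M (br \<Upsilon> (S_op br Z X)))"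
      by (rule S_op_eq[OF L])
    also have "\<dots> = (1/2::real) *\<^sub>R (?P (br \<Upsilon> (?M X)) + ?M (br \<Upsilon> (?P X)))"
      using W1 W2 by simp
    also have "\<dots> = (1/2::real) *\<^sub>R (br (?P \<Upsilon>) (?P (?M X)) + br (?M \<Upsilon>) (?M (?P X)))"
      by (simp add: Ad_hom[OF L])
    also have "\<dots> = (1/2::real) *\<^sub>R (br (?P \<Upsilon>) X + br (?M \<Upsilon>) X)"
      using Ad_inv[OF L, of Z X] Ad_inv[OF L, of "- Z" X] by simp
    also have "\<dots> = (1/2::real) *\<^sub>R br (?P \<Upsilon> + ?M \<Upsilon>) X"
      by (simp add: br_add_left[OF L])
    also have "\<dots> = (1/2 :: complex) *s br (?P \<Upsilon> + ?M \<Upsilon>) X"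
      by (simp add: scaleR_cvec)
    finally show ?thesis .
  qed
  show ?thesis using P1 P2 by blast
qed

end
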